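(* Let $P,PA$ be labelings, $c$ a command and $\rho_1,\rho_2,\mu_1,\mu_2$ states. Assume $\mathtt b\notin\mathrm{UsedVars}(c)$, $\rho_1(\mathtt b)=\rho_2(\mathtt b)=0$, $|a|_{\mu_1}>0$ and $|a|_{\mu_2}>0$ for every array $a$, $P;PA\vdash_{ct}c$, $\rho_1\sim_P\rho_2$ and $\mu_1\sim_{PA}\mu_2$. Then $\langle\mathrm{SiSLH}_P(c),\rho_1,\mu_1,\mathtt{false}\rangle\approx_s\langle\mathrm{SiSLH}_P(c),\rho_2,\mu_2,\mathtt{false}\rangle$.
   Context: Language AWhile: scalar variables $X\in\mathcal V$, array names $a\in\mathcal A$. Arithmetic expressions $e::=n\ (n\in\mathbb N)\mid X\mid \mathrm{op}_{\mathbb N}(e,\dots,e)\mid be\,?\,e_1:e_2$; boolean expressions $be::=\mathtt{true}\mid\mathtt{false}\mid\mathrm{cmp}(e,e)\mid\mathrm{op}_{\mathbb B}(be,\dots,be)$; commands $c::=\mathtt{skip}\mid X:=e\mid c_1;c_2\mid \mathtt{if}\ be\ \mathtt{then}\ c_1\ \mathtt{else}\ c_2\mid\mathtt{while}\ be\ \mathtt{do}\ c\mid X\leftarrow a[e]\mid a[e]\leftarrow e'$. A scalar state is $\rho:\mathcal V\to\mathbb N$; an array state $\mu$ gives each array $a$ a size $|a|_\mu$ and values $\mu(a)[i]$ for $0\le i<|a|_\mu$. $[\![\cdot]\!]_\rho$ is the usual pure evaluation. $\mathrm{UsedVars}(c)$ is the set of scalar variables occurring in $c$; $\mathtt b$ is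 a reserved scalar variable. Speculative semantics: configurations $\langle c,\rho,\mu,\beta\rangle$ with boolean misspeculation flag $\beta$; steps $\xrightarrow[d]{o}$ with optional observation $o\in\{\mathrm{branch}(v),\mathrm{read}(a,i),\mathrm{write}(a,i)\}$ and optional directive $d\in\{\mathit{step},\mathit{force},\mathrm{load}(a',j),\mathrm{store}(a',j)\}$. $X:=e\to\mathtt{skip}$ updating $\rho[X\mapsto[\![e]\!]_\rho]$; if $c_1$ steps to $c_1'$ then $c_1;c_2$ steps to $c_1';c_2$ with the same label; $\mathtt{skip};c\to c$; $\mathtt{while}\ be\ \mathtt{do}\ c\to\mathtt{if}\ be\ \mathtt{then}\ (c;\mathtt{while}\ be\ \mathtt{do}\ c)\ \mathtt{else}\ \mathtt{skip}$ (these keep $\beta$, have no observation/directive except as inherited). Conditional: with $\mathit{step}$ go to branch $v=[\![be]\!]_\rho$, flag unchanged; with $\mathit{force}$ go to branch $\neg v$ and set $\beta:=\mathtt{true}$; both observe $\mathrm{branch}(v)$. $X\leftarrow a[ie]$ with $\mathit{step}$: requires $i=[\![ie]\!]_\rho<|a|_\mu$, sets $X$ to $\mu(a)[i]$; with $\mathrm{load}(a',j)$: requires $\beta=\mathtt{true}$, $i\ge|a|_\mu$, $j<|a'|_\mu$, sets $X$ to $\mu(a')[j]$; both observe $\mathrm{read}(a,i)$. $a[ie]\leftarrow e$ with $\mathit{step}$: requires $i<|a|_\mu$, sets $\mu[a[i]\mapsto[\![e]\!]_\rho]$; with $\mathrm{store}(a',j)$: requires $\beta=\mathtt{true}$, $i\ge|a|_\mu$,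 $j<|a'|_\mu$, sets $\mu[a'[j]\mapsto[\![e]\!]_\rho]$; both observe $\mathrm{write}(a,i)$. Multi-step $\xrightarrow[D]{O}{}^*$ collects directives $D$ and observations $O$. $\langle c_1,\rho_1,\mu_1,\beta_1\rangle\approx_s\langle c_2,\rho_2,\mu_2,\beta_2\rangle$ iff for all $D,O_1,O_2$, if both configurations multi-step with directives $D$ producing $O_1$ resp. $O_2$, then $O_1=O_2$. Labels: $\mathtt{true}$=public, $\mathtt{false}$=secret; $\ell_1\sqsubseteq\ell_2$ iff $\ell_2=\mathtt{true}\Rightarrow\ell_1=\mathtt{true}$. $P:\mathcal V\to$ labels, $PA:\mathcal A\to$ labels; $P(e)$, $P(be)$ are public iff all scalar variables occurring are public. $\rho_1\sim_P\rho_2$ iff they agree on all $X$ with $P(X)=\mathtt{true}$; $\mu_1\sim_{PA}\mu_2$ iff they agree on sizes and contents of all $a$ with $PA(a)=\mathtt{true}$. CCT typing $P;PA\vdash_{ct}c$: $\mathtt{skip}$; $X:=e$ if $P(e)\sqsubseteq P(X)$; $c_1;c_2$ if both typed; $\mathtt{if}\ be\ \mathtt{then}\ c_1\ \mathtt{else}\ c_2$ if $P(be)=\mathtt{true}$ and both branches typed; $\mathtt{while}\ be\ \mathtt{do}\ c$ if $P(be)=\mathtt{true}$ and $c$ typed; $X\leftarrow a[i]$ if $P(i)=\mathtt{true}$ and $PA(a)\sqsubseteq P(X)$; $a[i]\leftarrow e$ if $P(i)=\mathtt{true}$ and $P(e)\sqsubseteq PA(a)$. Index-SLH recipe with parameters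 $B(be)$, $R(X,i)$, $W(i,e)$: $[\![\mathtt{skip}]\!]=\mathtt{skip}$; $[\![X:=e]\!]=X:=e$; $[\![c_1;c_2]\!]=[\![c_1]\!];[\![c_2]\!]$; $[\![\mathtt{if}\ be\ \mathtt{then}\ c_1\ \mathtt{else}\ c_2]\!]=\mathtt{if}\ B(be)\ \mathtt{then}\ (\mathtt b:=B(be)\,?\,\mathtt b:1;[\![c_1]\!])\ \mathtt{else}\ (\mathtt b:=B(be)\,?\,1:\mathtt b;[\![c_2]\!])$; $[\![\mathtt{while}\ be\ \mathtt{do}\ c]\!]=(\mathtt{while}\ B(be)\ \mathtt{do}\ (\mathtt b:=B(be)\,?\,\mathtt b:1;[\![c]\!]));\ \mathtt b:=B(be)\,?\,1:\mathtt b$; $[\![X\leftarrow a[i]]\!]=X\leftarrow a[R(X,i)]$; $[\![a[i]\leftarrow e]\!]=a[W(i,e)]\leftarrow e$. With $m(i)=(\mathtt b==1)\,?\,0:i$, $\mathrm{SiSLH}_P$ is the instance with $B(be)=be$; $R(X,i)=m(i)$ if $P(X)=\mathtt{true}$, else $i$; $W(i,e)=m(i)$ if $P(e)=\mathtt{false}$, else $i$. *)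

theory Defs
  imports Main
begin

type_synonym vname = string
type_synonym aname = string

datatype aexp = ANum nat | AId vname | AOp "nat list \<Rightarrow> nat" "aexp list"
  | ACond bexp aexp aexp
and bexp = BTrue | BFalse | BCmp "nat \<Rightarrow> nat \<Rightarrow> bool" aexp aexp
  | BOp "bool list \<Rightarrow> bool" "bexp list"

datatype com = Skip | Asgn vname aexp | Seq com com | If bexp com com
  | While bexp com | ARead vname aname aexp | AWrite aname aexp aexp

type_synonym state = "vname \<Rightarrow> nat"
(* array state: each array is a list; its size is the list length *)
type_synonym astate = "aname \<Rightarrow> nat list"

fun aeval :: "aexp \<Rightarrow> state \<Rightarrow> nat" and beval :: "bexp \<Rightarrow> state \<Rightarrow> bool" where
  "aeval (ANum n) s = n"
| "aeval (AId x) s = s x"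
| "aeval (AOp f es) s = f (map (\<lambda>e. aeval e s) es)"
| "aeval (ACond be e1 e2) s = (if beval be s then aeval e1 s else aeval e2 s)"
| "beval BTrue s = True"
| "beval BFalse s = False"
| "beval (BCmp f e1 e2) s = f (aeval e1 s) (aeval e2 s)"
| "beval (BOp f bs) s = f (map (\<lambda>b. beval b s) bs)"

fun avars :: "aexp \<Rightarrow> vname set" and bvars :: "bexp \<Rightarrow> vname set" where
  "avars (ANum n) = {}"
| "avars (AId x) = {x}"
| "avars (AOp f es) = (\<Union>e\<in>set es. avars e)"
| "avars (ACond be e1 e2) = bvars be \<union> avars e1 \<union> avars e2"
| "bvars BTrue = {}"
| "bvars BFalse = {}"
| "bvars (BCmp f e1 e2) = avars e1 \<union> avars e2"
| "bvars (BOp f bs) = (\<Union>b\<in>set bs. bvars b)"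

fun used_vars :: "com \<Rightarrow> vname set" where
  "used_vars Skip = {}"
| "used_vars (Asgn x e) = {x} \<union> avars e"
| "used_vars (Seq c1 c2) = used_vars c1 \<union> used_vars c2"
| "used_vars (If be c1 c2) = bvars be \<union> used_vars c1 \<union> used_vars c2"
| "used_vars (While be c) = bvars be \<union> used_vars c"
| "used_vars (ARead x a i) = {x} \<union> avars i"
| "used_vars (AWrite a i e) = avars i \<union> avars e"

definition bvar :: vname where "bvar = ''b''"

datatype obs = OBranch bool | ORead aname nat | OWrite aname nat
datatype dir = DStep | DForce | DLoad aname nat | DStore aname nat

type_synonym config = "com \<times> state \<times> astate \<times> bool"

(* optional directive / observation encoded as lists of length \<le> 1 *)
inductive spec_step :: "config \<Rightarrow> dir list \<Rightarrow> obs list \<Rightarrow> config \<Rightarrow> bool" where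
  Asgn: "spec_step (Asgn x e, \<rho>, \<mu>, \<beta>) [] [] (Skip, \<rho>(x := aeval e \<rho>), \<mu>, \<beta>)"
| Seq: "spec_step (c1, \<rho>, \<mu>, \<beta>) ds os (c1', \<rho>', \<mu>', \<beta>') \<Longrightarrow>
        spec_step (Seq c1 c2, \<rho>, \<mu>, \<beta>) ds os (Seq c1' c2, \<rho>', \<mu>', \<beta>')"
| Seq_Skip: "spec_step (Seq Skip c, \<rho>, \<mu>, \<beta>) [] [] (c, \<rho>, \<mu>, \<beta>)"
| If: "v = beval be \<rho> \<Longrightarrow>
       spec_step (If be c1 c2, \<rho>, \<mu>, \<beta>) [DStep] [OBranch v]
                 (if v then c1 else c2, \<rho>, \<mu>, \<beta>)"
| If_Force: "v = beval be \<rho> \<Longrightarrow>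
       spec_step (If be c1 c2, \<rho>, \<mu>, \<beta>) [DForce] [OBranch v]
                 (if v then c2 else c1, \<rho>, \<mu>, True)"
| While: "spec_step (While be c, \<rho>, \<mu>, \<beta>) [] []
                 (If be (Seq c (While be c)) Skip, \<rho>, \<mu>, \<beta>)"
| ARead: "i = aeval ie \<rho> \<Longrightarrow> i < length (\<mu> a) \<Longrightarrow>
       spec_step (ARead x a ie, \<rho>, \<mu>, \<beta>) [DStep] [ORead a i]
                 (Skip, \<rho>(x := \<mu> a ! i), \<mu>, \<beta>)"
| ARead_Force: "i = aeval ie \<rho> \<Longrightarrow> \<beta> \<Longrightarrow> i \<ge> length (\<mu> a) \<Longrightarrow> j < length (\<mu> a') \<Longrightarrow>
       spec_step (ARead x a ie, \<rho>, \<mu>, \<beta>) [DLoad a' j] [ORead a i]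
                 (Skip, \<rho>(x := \<mu> a' ! j), \<mu>, \<beta>)"
| AWrite: "i = aeval ie \<rho> \<Longrightarrow> i < length (\<mu> a) \<Longrightarrow>
       spec_step (AWrite a ie e, \<rho>, \<mu>, \<beta>) [DStep] [OWrite a i]
                 (Skip, \<rho>, \<mu>(a := (\<mu> a)[i := aeval e \<rho>]), \<beta>)"
| AWrite_Force: "i = aeval ie \<rho> \<Longrightarrow> \<beta> \<Longrightarrow> i \<ge> length (\<mu> a) \<Longrightarrow> j < length (\<mu> a') \<Longrightarrow>
       spec_step (AWrite a ie e, \<rho>, \<mu>, \<beta>) [DStore a' j] [OWrite a i]
                 (Skip, \<rho>, \<mu>(a' := (\<mu> a')[j := aeval e \<rho>]), \<beta>)"

inductive spec_multi :: "config \<Rightarrow> dir list \<Rightarrow> obs list \<Rightarrow> config \<Rightarrow> bool" where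
  refl: "spec_multi c [] [] c"
| step: "spec_step c ds os c' \<Longrightarrow> spec_multi c' ds' os' c'' \<Longrightarrow>
         spec_multi c (ds @ ds') (os @ os') c''"

definition spec_equiv :: "config \<Rightarrow> config \<Rightarrow> bool" where
  "spec_equiv cf1 cf2 \<longleftrightarrow>
     (\<forall>D O1 O2 cf1' cf2'. spec_multi cf1 D O1 cf1' \<longrightarrow> spec_multi cf2 D O2 cf2' \<longrightarrow> O1 = O2)"

(* True = public, False = secret *)
definition flows :: "bool \<Rightarrow> bool \<Rightarrow> bool" where
  "flows l1 l2 \<longleftrightarrow> (l2 \<longrightarrow> l1)"

definition label_a :: "(vname \<Rightarrow> bool) \<Rightarrow> aexp \<Rightarrow> bool" where
  "label_a P e \<longleftrightarrow> (\<forall>x\<in>avars e. P x)"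

definition label_b :: "(vname \<Rightarrow> bool) \<Rightarrow> bexp \<Rightarrow> bool" where
  "label_b P be \<longleftrightarrow> (\<forall>x\<in>bvars be. P x)"

definition pub_equiv :: "(vname \<Rightarrow> bool) \<Rightarrow> state \<Rightarrow> state \<Rightarrow> bool" where
  "pub_equiv P \<rho>1 \<rho>2 \<longleftrightarrow> (\<forall>x. P x \<longrightarrow> \<rho>1 x = \<rho>2 x)"

definition apub_equiv :: "(aname \<Rightarrow> bool) \<Rightarrow> astate \<Rightarrow> astate \<Rightarrow> bool" where
  "apub_equiv PA \<mu>1 \<mu>2 \<longleftrightarrow> (\<forall>a. PA a \<longrightarrow> \<mu>1 a = \<mu>2 a)"

inductive ct_typed :: "(vname \<Rightarrow> bool) \<Rightarrow> (aname \<Rightarrow> bool) \<Rightarrow> com \<Rightarrow> bool" where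
  CT_Skip: "ct_typed P PA Skip"
| CT_Asgn: "flows (label_a P e) (P x) \<Longrightarrow> ct_typed P PA (Asgn x e)"
| CT_Seq: "ct_typed P PA c1 \<Longrightarrow> ct_typed P PA c2 \<Longrightarrow> ct_typed P PA (Seq c1 c2)"
| CT_If: "label_b P be \<Longrightarrow> ct_typed P PA c1 \<Longrightarrow> ct_typed P PA c2 \<Longrightarrow>
          ct_typed P PA (If be c1 c2)"
| CT_While: "label_b P be \<Longrightarrow> ct_typed P PA c \<Longrightarrow> ct_typed P PA (While be c)"
| CT_ARead: "label_a P i \<Longrightarrow> flows (PA a) (P x) \<Longrightarrow> ct_typed P PA (ARead x a i)"
| CT_AWrite: "label_a P i \<Longrightarrow> flows (label_a P e) (PA a) \<Longrightarrow> ct_typed P PA (AWrite a i e)"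

fun idx_slh :: "(bexp \<Rightarrow> bexp) \<Rightarrow> (vname \<Rightarrow> aexp \<Rightarrow> aexp) \<Rightarrow> (aexp \<Rightarrow> aexp \<Rightarrow> aexp)
                \<Rightarrow> com \<Rightarrow> com" where
  "idx_slh B R W Skip = Skip"
| "idx_slh B R W (Asgn x e) = Asgn x e"
| "idx_slh B R W (Seq c1 c2) = Seq (idx_slh B R W c1) (idx_slh B R W c2)"
| "idx_slh B R W (If be c1 c2) =
     If (B be)
        (Seq (Asgn bvar (ACond (B be) (AId bvar) (ANum 1))) (idx_slh B R W c1))
        (Seq (Asgn bvar (ACond (B be) (ANum 1) (AId bvar))) (idx_slh B R W c2))"
| "idx_slh B R W (While be c) =
     Seq (While (B be) (Seq (Asgn bvar (ACond (B be) (AId bvar) (ANum 1))) (idx_slh B R W c)))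
         (Asgn bvar (ACond (B be) (ANum 1) (AId bvar)))"
| "idx_slh B R W (ARead x a i) = ARead x a (R x i)"
| "idx_slh B R W (AWrite a i e) = AWrite a (W i e) e"

definition mask :: "aexp \<Rightarrow> aexp" where
  "mask i = ACond (BCmp (=) (AId bvar) (ANum 1)) (ANum 0) i"

definition sislh :: "(vname \<Rightarrow> bool) \<Rightarrow> com \<Rightarrow> com" where
  "sislh P = idx_slh (\<lambda>be. be)
                     (\<lambda>x i. if P x then mask i else i)
                     (\<lambda>i e. if \<not> label_a P e then mask i else i)"

end

theory Submission
  imports Defs
begin

lemma eval_eq:
  "(\<forall>x\<in>avars e. r1 x = r2 x) \<Longrightarrow> aeval e r1 = aeval e r2"
  "(\<forall>x\<in>bvars b. r1 x = r2 x) \<Longrightarrow> beval b r1 = beval b r2"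
proof (induction e and b)
qed (auto cong: map_cong)

lemma aeval_pub: "label_a P e \<Longrightarrow> pub_equiv P r1 r2 \<Longrightarrow> aeval e r1 = aeval e r2"
  by (rule eval_eq(1)) (auto simp: label_a_def pub_equiv_def)

lemma beval_pub: "label_b P b \<Longrightarrow> pub_equiv P r1 r2 \<Longrightarrow> beval b r1 = beval b r2"
  by (rule eval_eq(2)) (auto simp: label_b_def pub_equiv_def)

lemma aeval_mask: "aeval i r1 = aeval i r2 \<Longrightarrow> r1 bvar = r2 bvar \<Longrightarrow> aeval (mask i) r1 = aeval (mask i) r2"
  by (simp add: mask_def)

inductive lwf :: "(vname \<Rightarrow> bool) \<Rightarrow> (aname \<Rightarrow> bool) \<Rightarrow> com \<Rightarrow> bool" for P PA where
  L_Skip: "lwf P PA Skip"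
| L_Asgn: "x \<noteq> bvar \<Longrightarrow> flows (label_a P e) (P x) \<Longrightarrow> lwf P PA (Asgn x e)"
| L_AsgnT: "label_b P be \<Longrightarrow> lwf P PA (Asgn bvar (ACond be (AId bvar) (ANum 1)))"
| L_AsgnF: "label_b P be \<Longrightarrow> lwf P PA (Asgn bvar (ACond be (ANum 1) (AId bvar)))"
| L_Seq: "lwf P PA c1 \<Longrightarrow> lwf P PA c2 \<Longrightarrow> lwf P PA (Seq c1 c2)"
| L_If: "label_b P be \<Longrightarrow> lwf P PA c1 \<Longrightarrow> lwf P PA c2 \<Longrightarrow> lwf P PA (If be c1 c2)"
| L_While: "label_b P be \<Longrightarrow> lwf P PA c \<Longrightarrow> lwf P PA (While be c)"
| L_ReadP: "x \<noteq> bvar \<Longrightarrow> label_a P i \<Longrightarrow> P x \<Longrightarrow> PA a \<Longrightarrow> lwf P PA (ARead x a (mask i))"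
| L_ReadS: "x \<noteq> bvar \<Longrightarrow> label_a P i \<Longrightarrow> \<not> P x \<Longrightarrow> lwf P PA (ARead x a i)"
| L_WriteP: "label_a P i \<Longrightarrow> label_a P e \<Longrightarrow> lwf P PA (AWrite a i e)"
| L_WriteS: "label_a P i \<Longrightarrow> \<not> label_a P e \<Longrightarrow> \<not> PA a \<Longrightarrow> lwf P PA (AWrite a (mask i) e)"

abbreviation TT :: "bexp \<Rightarrow> aexp" where "TT be \<equiv> ACond be (AId bvar) (ANum 1)"
abbreviation FF :: "bexp \<Rightarrow> aexp" where "FF be \<equiv> ACond be (ANum 1) (AId bvar)"

inductive wf :: "(vname \<Rightarrow> bool) \<Rightarrow> (aname \<Rightarrow> bool) \<Rightarrow> com \<Rightarrow> bool" for P PA where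
  W_Skip: "wf P PA Skip"
| W_Asgn: "lwf P PA (Asgn x e) \<Longrightarrow> wf P PA (Asgn x e)"
| W_Read: "lwf P PA (ARead x a i) \<Longrightarrow> wf P PA (ARead x a i)"
| W_Write: "lwf P PA (AWrite a i e) \<Longrightarrow> wf P PA (AWrite a i e)"
| W_Seq: "wf P PA c1 \<Longrightarrow> wf P PA c2 \<Longrightarrow> wf P PA (Seq c1 c2)"
| W_If: "label_b P be \<Longrightarrow> wf P PA c1 \<Longrightarrow> wf P PA c2 \<Longrightarrow>
    wf P PA (If be (Seq (Asgn bvar (TT be)) c1) (Seq (Asgn bvar (FF be)) c2))"
| W_Loop: "label_b P be \<Longrightarrow> wf P PA c \<Longrightarrow>
    wf P PA (Seq (While be (Seq (Asgn bvar (TT be)) c)) (Asgn bvar (FF be)))"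
| W_LoopU: "label_b P be \<Longrightarrow> wf P PA c \<Longrightarrow>
    wf P PA (Seq (If be (Seq (Seq (Asgn bvar (TT be)) c) (While be (Seq (Asgn bvar (TT be)) c))) Skip)
       (Asgn bvar (FF be)))"
| W_LoopR: "label_b P be \<Longrightarrow> wf P PA c \<Longrightarrow> wf P PA c' \<Longrightarrow>
    wf P PA (Seq (Seq c' (While be (Seq (Asgn bvar (TT be)) c))) (Asgn bvar (FF be)))"

lemma wf_lwf: "wf P PA c \<Longrightarrow> lwf P PA c"
  by (induction rule: wf.induct) (blast intro: lwf.intros)+

lemma typed_wf: "ct_typed P PA c \<Longrightarrow> bvar \<notin> used_vars c \<Longrightarrow> wf P PA (sislh P c)"
proof (induction rule: ct_typed.induct)
  case (CT_Asgn P e x PA)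
  then show ?case by (auto simp: sislh_def intro!: wf.intros lwf.intros)
next
  case (CT_ARead P i PA a x)
  then show ?case
  proof (cases "P x")
    case True
    then show ?thesis using CT_ARead by (auto simp: sislh_def flows_def intro!: W_Read L_ReadP)
  next
    case False
    then show ?thesis using CT_ARead by (auto simp: sislh_def flows_def intro!: W_Read L_ReadS)
  qed
next
  case (CT_AWrite P i e PA a)
  then show ?case 
  proof (cases "label_a P e")
    case True
    then show ?thesis using CT_AWrite by (auto simp: sislh_def flows_def intro!: W_Write L_WriteP)
  next
    case False
    then show ?thesis using CT_AWrite by (auto simp: sislh_def flows_def intro!: W_Write L_WriteS)
  qed
next
  case (CT_If P be PA c1 c2)
  then show ?case unfolding sislh_def idx_slh.simps by (intro W_If) (auto simp: sislh_def)
next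
  case (CT_While P be PA c)
  then show ?case unfolding sislh_def idx_slh.simps by (intro W_Loop) (auto simp: sislh_def)
qed (auto simp: sislh_def intro!: wf.intros lwf.intros)

fun hsb :: "com \<Rightarrow> state \<Rightarrow> bool" where
  "hsb (Asgn x e) r = (x = bvar \<and> aeval e r = 1)"
| "hsb (Seq c1 c2) r = (hsb c1 r \<or> (c1 = Skip \<and> hsb c2 r))"
| "hsb _ r = False"

inductive_cases SkipE[elim!]: "spec_step (Skip, r, m, b) ds os cf"
inductive_cases SeqE: "spec_step (Seq c1 c2, r, m, b) ds os cf"
inductive_cases AsgnE: "spec_step (Asgn x e, r, m, b) ds os cf"
inductive_cases IfE: "spec_step (If be c1 c2, r, m, b) ds os cf"
inductive_cases WhileE: "spec_step (While be c, r, m, b) ds os cf"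
inductive_cases ReadE: "spec_step (ARead x a i, r, m, b) ds os cf"
inductive_cases WriteE: "spec_step (AWrite a i e, r, m, b) ds os cf"

lemma step_len: "spec_step cf ds os cf' \<Longrightarrow> length os = length ds"
  by (induction rule: spec_step.induct) auto

lemma multi_len: "spec_multi cf ds os cf' \<Longrightarrow> length os = length ds"
  by (induction rule: spec_multi.induct) (auto dest: step_len)

lemma step_beta: "spec_step cf ds os cf' \<Longrightarrow> (snd (snd (snd cf)) \<longrightarrow> snd (snd (snd cf')))
   \<and> (snd (snd (snd cf')) \<and> \<not> snd (snd (snd cf)) \<longrightarrow> ds = [DForce])"
  by (induction rule: spec_step.induct) auto

lemma step_len_same: "spec_step (c,r1,m1,b1) ds1 os1 cf1 \<Longrightarrow> spec_step (c,r2,m2,b2) ds2 os2 cf2 \<Longrightarrow>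
  length ds1 = length ds2"
proof (induction "(c,r1,m1,b1)" ds1 os1 cf1 arbitrary: c r1 m1 b1 cf2 ds2 os2 rule: spec_step.induct)
  case (Seq c1 \<rho> \<mu> \<beta> ds os c1' \<rho>' \<mu>' \<beta>' c2)
  then show ?case by (auto elim!: SeqE)
qed (auto elim: SeqE AsgnE IfE WhileE ReadE WriteE)


lemmas wfI' = wf.intros[unfolded One_nat_def]
lemmas lwfI' = lwf.intros[unfolded One_nat_def]

lemma wf_skipF: "label_b P be \<Longrightarrow> wf P PA (Seq Skip (Asgn bvar (ACond be (ANum (Suc 0)) (AId bvar))))"
  by (intro W_Seq W_Skip W_Asgn) (metis L_AsgnF One_nat_def)

lemma wf_LoopR2: "label_b P be \<Longrightarrow> wf P PA c \<Longrightarrow>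
    wf P PA (Seq (Seq (Seq (Asgn bvar (ACond be (AId bvar) (ANum (Suc 0)))) c) (While be (Seq (Asgn bvar (ACond be (AId bvar) (ANum (Suc 0)))) c))) (Asgn bvar (ACond be (ANum (Suc 0)) (AId bvar))))"
  by (metis W_LoopR W_Seq W_Asgn L_AsgnT One_nat_def)

lemma wf_pres: "wf P PA c \<Longrightarrow> spec_step (c,r,m,b) ds os (c',r',m',b') \<Longrightarrow> wf P PA c'"
proof (induction c arbitrary: c' r m b ds os r' m' b' rule: wf.induct)
  case (W_Seq c1 c2)
  then show ?case by (auto elim!: SeqE intro: wfI')
next
  case (W_If be c1 c2)
  then show ?case by (auto elim!: IfE intro!: wfI' lwfI')
next
  case (W_Loop be c)
  then show ?case by (auto elim!: SeqE WhileE intro: wfI')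
next
  case (W_LoopU be c)
  then show ?case by (auto elim!: SeqE IfE intro: wf_skipF wf_LoopR2)
next
  case (W_LoopR be c c')
  then show ?case by (auto elim!: SeqE intro: wfI')
qed (auto elim!: AsgnE ReadE WriteE intro: wf.intros)

lemma force_hsb: "wf P PA c \<Longrightarrow> spec_step (c,r,m,b) [DForce] os (c',r',m',b') \<Longrightarrow> hsb c' r'"
proof (induction c arbitrary: c' r m b os r' m' b' rule: wf.induct)
  case (W_Seq c1 c2)
  then show ?case by (auto elim!: SeqE)
next
  case (W_If be c1 c2)
  then show ?case by (auto elim!: IfE)
next
  case (W_Loop be c)
  then show ?case by (auto elim!: SeqE WhileE)
next
  case (W_LoopU be c)
  then show ?case by (auto elim!: SeqE IfE)
next
  case (W_LoopR be c c')
  then show ?case by (auto elim!: SeqE)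
qed (auto elim!: AsgnE ReadE WriteE)

lemma hsb_step: "spec_step cf ds os cf' \<Longrightarrow> hsb (fst cf) (fst (snd cf)) \<Longrightarrow>
   fst (snd cf') bvar = 1 \<or> hsb (fst cf') (fst (snd cf'))"
  by (induction rule: spec_step.induct) auto

lemma b1_step: "spec_step cf ds os cf' \<Longrightarrow> lwf P PA (fst cf) \<Longrightarrow> fst (snd cf) bvar = 1 \<Longrightarrow>
   fst (snd cf') bvar = 1"
proof (induction rule: spec_step.induct)
  case (Seq c1 \<rho> \<mu> \<beta> ds os c1' \<rho>' \<mu>' \<beta>' c2)
  then show ?case by (auto elim: lwf.cases)
next
  case (Asgn x e \<rho> \<mu> \<beta>)
  then show ?case by (auto elim: lwf.cases)
next
  case (ARead i ie \<rho> \<mu> a x \<beta>)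
  then show ?case by (auto elim: lwf.cases)
next
  case (ARead_Force i ie \<rho> \<beta> \<mu> a j a' x)
  then show ?case by (auto elim: lwf.cases)
qed auto

lemma len_step: "spec_step cf ds os cf' \<Longrightarrow> \<forall>a. 0 < length (fst (snd (snd cf)) a) \<Longrightarrow>
   \<forall>a. 0 < length (fst (snd (snd cf')) a)"
  by (induction rule: spec_step.induct) auto

lemma inv_step: "spec_step (c,r,m,b) ds os (c',r',m',b') \<Longrightarrow> wf P PA c \<Longrightarrow>
   (b \<longrightarrow> r bvar = 1 \<or> hsb c r) \<Longrightarrow> (b' \<longrightarrow> r' bvar = 1 \<or> hsb c' r')"
  using step_beta[of "(c,r,m,b)" ds os "(c',r',m',b')"] hsb_step[of "(c,r,m,b)" ds os "(c',r',m',b')"]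
    b1_step[of "(c,r,m,b)" ds os "(c',r',m',b')" P PA] force_hsb[of P PA c r m b os c' r' m' b']
    wf_lwf[of P PA c]
  by auto


fun rel :: "(vname \<Rightarrow> bool) \<Rightarrow> (aname \<Rightarrow> bool) \<Rightarrow> config \<Rightarrow> config \<Rightarrow> bool" where
  "rel P PA (c1,r1,m1,b1) (c2,r2,m2,b2) = (c1 = c2 \<and> pub_equiv P r1 r2 \<and> r1 bvar = r2 bvar
     \<and> apub_equiv PA m1 m2 \<and> b1 = b2)"

lemma pub_upd: "(P x \<longrightarrow> v1 = v2) \<Longrightarrow> pub_equiv P r1 r2 \<Longrightarrow> pub_equiv P (r1(x:=v1)) (r2(x:=v2))"
  by (auto simp: pub_equiv_def)

lemma apub_upd: "(PA a \<longrightarrow> l1 = l2) \<Longrightarrow> apub_equiv PA m1 m2 \<Longrightarrow> apub_equiv PA (m1(a:=l1)) (m2(a:=l2))"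
  by (auto simp: apub_equiv_def)

lemma mask_val: "r bvar = 1 \<Longrightarrow> aeval (mask i) r = 0"
  by (simp add: mask_def)

lemma step_rel: "spec_step (c,r1,m1,b) ds os1 cf1 \<Longrightarrow> spec_step (c,r2,m2,b) ds os2 cf2 \<Longrightarrow>
  lwf P PA c \<Longrightarrow> pub_equiv P r1 r2 \<Longrightarrow> r1 bvar = r2 bvar \<Longrightarrow> apub_equiv PA m1 m2 \<Longrightarrow>
  (b \<longrightarrow> r1 bvar = 1 \<or> hsb c r1) \<Longrightarrow> \<forall>a. 0 < length (m1 a) \<Longrightarrow>
  os1 = os2 \<and> rel P PA cf1 cf2"
proof (induction "(c,r1,m1,b)" ds os1 cf1 arbitrary: c r1 m1 b cf2 os2 r2 m2 rule: spec_step.induct)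
  case (Asgn x e \<rho> \<mu> \<beta>)
  from Asgn.prems(2) have "(P x \<longrightarrow> aeval e \<rho> = aeval e r2) \<and> (x = bvar \<longrightarrow> aeval e \<rho> = aeval e r2)"
  proof (cases rule: lwf.cases)
    case (L_Asgn)
    then show ?thesis
      using aeval_pub[OF _ Asgn.prems(3)] by (auto simp: flows_def)
  next
    case (L_AsgnT be)
    then show ?thesis
      using beval_pub[OF _ Asgn.prems(3)] Asgn.prems(4) by auto
  next
    case (L_AsgnF be)
    then show ?thesis
      using beval_pub[OF _ Asgn.prems(3)] Asgn.prems(4) by auto
  qed
  then show ?case using Asgn.prems(1,3,4,5) by (auto elim!: AsgnE intro!: pub_upd)
next
  case (Seq c1 \<rho> \<mu> \<beta> ds os c1' \<rho>' \<mu>' \<beta>' c2)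
  show ?case
  proof (rule SeqE[OF Seq.prems(1)])
    fix c1'' \<rho>'' \<mu>'' \<beta>''
    assume a1: "cf2 = (Seq c1'' c2, \<rho>'', \<mu>'', \<beta>'')"
      and a2: "spec_step (c1, r2, m2, \<beta>) ds os2 (c1'', \<rho>'', \<mu>'', \<beta>'')"
    have l: "lwf P PA c1" using Seq.prems(2) by (auto elim: lwf.cases)
    have ns: "c1 \<noteq> Skip" using Seq.hyps(1) by auto
    have "\<beta> \<longrightarrow> \<rho> bvar = 1 \<or> hsb c1 \<rho>" using Seq.prems(6) ns by auto
    from Seq.hyps(2)[OF a2 l Seq.prems(3,4,5) this Seq.prems(7)] a1 show ?thesis by auto
  next
    assume "c1 = Skip"
    then show ?thesis using Seq.hyps(1) by auto
  qed
next
  case (Seq_Skip c \<rho> \<mu> \<beta>)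
  then show ?case by (auto elim!: SeqE)
next
  case (If v be \<rho> c1 c2 \<mu> \<beta>)
  have "label_b P be" using If.prems(2) by (auto elim: lwf.cases)
  then have "beval be \<rho> = beval be r2" using beval_pub If.prems(3) by blast
  then show ?case using If by (auto elim!: IfE)
next
  case (If_Force v be \<rho> c1 c2 \<mu> \<beta>)
  have "label_b P be" using If_Force.prems(2) by (auto elim: lwf.cases)
  then have "beval be \<rho> = beval be r2" using beval_pub If_Force.prems(3) by blast
  then show ?case using If_Force by (auto elim!: IfE)
next
  case (While be c \<rho> \<mu> \<beta>)
  then show ?case by (auto elim!: WhileE)
next
  case (ARead i ie \<rho> \<mu> a x \<beta>)
  from ARead.prems(2) show ?case
  proof (cases rule: lwf.cases)
    case (L_ReadP i0)
    have "aeval ie \<rho> = aeval ie r2" using L_ReadP aeval_pub[OF _ ARead.prems(3)] ARead.prems(4)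
      by (auto intro: aeval_mask)
    moreover have "\<mu> a = m2 a" using L_ReadP ARead.prems(5) by (auto simp: apub_equiv_def)
    ultimately show ?thesis using ARead L_ReadP by (auto elim!: ReadE intro!: pub_upd)
  next
    case (L_ReadS)
    have "aeval ie \<rho> = aeval ie r2" using L_ReadS aeval_pub[OF _ ARead.prems(3)] by auto
    then show ?thesis using ARead L_ReadS by (auto elim!: ReadE intro!: pub_upd)
  qed
next
  case (ARead_Force i ie \<rho> \<beta> \<mu> a j a' x)
  from ARead_Force.prems(2) show ?case
  proof (cases rule: lwf.cases)
    case (L_ReadP i0)
    then have "\<rho> bvar = 1" using ARead_Force by auto
    then have "i = 0" using ARead_Force.hyps(1) L_ReadP by (simp add: mask_val)
    then show ?thesis using ARead_Force by auto
  next
    case (L_ReadS)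
    have "aeval ie \<rho> = aeval ie r2" using L_ReadS aeval_pub[OF _ ARead_Force.prems(3)] by auto
    then show ?thesis using ARead_Force L_ReadS by (auto elim!: ReadE intro!: pub_upd)
  qed
next
  case (AWrite i ie \<rho> \<mu> a e \<beta>)
  from AWrite.prems(2) show ?case
  proof (cases rule: lwf.cases)
    case (L_WriteP)
    have "aeval ie \<rho> = aeval ie r2" "aeval e \<rho> = aeval e r2"
      using L_WriteP aeval_pub[OF _ AWrite.prems(3)] by auto
    then show ?thesis using AWrite L_WriteP by (auto elim!: WriteE intro!: apub_upd simp: apub_equiv_def)
  next
    case (L_WriteS i0)
    have "aeval ie \<rho> = aeval ie r2" using L_WriteS aeval_pub[OF _ AWrite.prems(3)] AWrite.prems(4)
      by (auto intro: aeval_mask)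
    then show ?thesis using AWrite L_WriteS by (auto elim!: WriteE intro!: apub_upd)
  qed
next
  case (AWrite_Force i ie \<rho> \<beta> \<mu> a j a' e)
  from AWrite_Force.prems(2) show ?case
  proof (cases rule: lwf.cases)
    case (L_WriteP)
    have "aeval ie \<rho> = aeval ie r2" "aeval e \<rho> = aeval e r2"
      using L_WriteP aeval_pub[OF _ AWrite_Force.prems(3)] by auto
    then show ?thesis using AWrite_Force L_WriteP by (auto elim!: WriteE intro!: apub_upd simp: apub_equiv_def)
  next
    case (L_WriteS i0)
    then have "\<rho> bvar = 1" using AWrite_Force by auto
    then have "i = 0" using AWrite_Force.hyps(1) L_WriteS by (simp add: mask_val)
    then show ?thesis using AWrite_Force by auto
  qed
qed


definition good :: "(vname \<Rightarrow> bool) \<Rightarrow> (aname \<Rightarrow> bool) \<Rightarrow> config \<Rightarrow> bool" where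
  "good P PA cf = (case cf of (c,r,m,b) \<Rightarrow> wf P PA c \<and> (b \<longrightarrow> r bvar = 1 \<or> hsb c r)
      \<and> (\<forall>a. 0 < length (m a)))"

lemma multi_main: "spec_multi cf1 D O1 cf1' \<Longrightarrow> rel P PA cf1 cf2 \<Longrightarrow> good P PA cf1 \<Longrightarrow>
   spec_multi cf2 D O2 cf2' \<Longrightarrow> O1 = O2"
proof (induction arbitrary: cf2 O2 rule: spec_multi.induct)
  case (refl c)
  then show ?case using multi_len by fastforce
next
  case (step cf ds os cfm ds' os' cf'')
  note H1 = step.hyps(1) and H2 = step.hyps(2) and IH = step.IH and PR = step.prems
  from step.prems(3) show ?case
  proof (cases rule: spec_multi.cases)
    case refl
    then show ?thesis using multi_len[OF H2] step_len[OF H1] by auto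
  next
    case (step ds2 os2 cfm2 ds2' os2')
    note I = step
    obtain c r1 m1 b1 where cf: "cf = (c,r1,m1,b1)" by (cases cf) auto
    obtain c2 r2 m2 b2 where cf2: "cf2 = (c2,r2,m2,b2)" by (cases cf2) auto
    obtain cm r1m m1m b1m where cfm: "cfm = (cm,r1m,m1m,b1m)" by (cases cfm) auto
    have R: "c2 = c" "pub_equiv P r1 r2" "r1 bvar = r2 bvar" "apub_equiv PA m1 m2" "b2 = b1"
      using PR(1) cf cf2 by auto
    have G: "wf P PA c" "b1 \<longrightarrow> r1 bvar = 1 \<or> hsb c r1" "\<forall>a. 0 < length (m1 a)"
      using PR(2) cf by (auto simp: good_def)
    have s1: "spec_step (c,r1,m1,b1) ds os cfm" using H1 cf by simp
    have s2: "spec_step (c,r2,m2,b1) ds2 os2 cfm2" using I(3) cf2 R by simp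
    have "length ds = length ds2" using step_len_same[OF s1 s2] .
    then have dd: "ds = ds2" "ds' = ds2'" using I(1) by auto
    have sr: "os = os2 \<and> rel P PA cfm cfm2"
      using step_rel[OF s1 s2[unfolded dd[symmetric]] wf_lwf[OF G(1)] R(2,3,4) G(2,3)] .
    have gm: "good P PA cfm"
      using wf_pres[OF G(1) s1[unfolded cfm]] inv_step[OF s1[unfolded cfm] G(1) G(2)]
        len_step[OF s1] G(3) cfm by (auto simp: good_def)
    have "os' = os2'" using IH[OF _ gm I(4)[unfolded dd[symmetric]]] sr by auto
    then show ?thesis using sr I(2) by simp
  qed
qed

theorem theorem3p1:
  fixes P :: "vname \<Rightarrow> bool" and PA :: "aname \<Rightarrow> bool" and c :: com
    and \<rho>1 \<rho>2 :: state and \<mu>1 \<mu>2 :: astate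
  assumes "bvar \<notin> used_vars c"
    and "\<rho>1 bvar = 0" and "\<rho>2 bvar = 0"
    and "\<forall>a. length (\<mu>1 a) > 0" and "\<forall>a. length (\<mu>2 a) > 0"
    and "ct_typed P PA c"
    and "pub_equiv P \<rho>1 \<rho>2"
    and "apub_equiv PA \<mu>1 \<mu>2"
  shows "spec_equiv (sislh P c, \<rho>1, \<mu>1, False) (sislh P c, \<rho>2, \<mu>2, False)"
  unfolding spec_equiv_def
proof (intro allI impI)
  fix D O1 O2 cf1' cf2'
  assume m1: "spec_multi (sislh P c, \<rho>1, \<mu>1, False) D O1 cf1'"
    and m2: "spec_multi (sislh P c, \<rho>2, \<mu>2, False) D O2 cf2'"
  have "rel P PA (sislh P c, \<rho>1, \<mu>1, False) (sislh P c, \<rho>2, \<mu>2, False)"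
    using assms by simp
  moreover have "good P PA (sislh P c, \<rho>1, \<mu>1, False)"
    using assms typed_wf by (simp add: good_def)
  ultimately show "O1 = O2" using multi_main m1 m2 by blast
qed

end
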